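(* In the setting described in the context, let $\alpha>1$, $\beta>1$, $k\in\{2,\ldots,K\}$, and $j_*\in\mathbb N\cap[(2^\beta+1)^{1/\beta},\infty)$. Assume that for some $\zeta>0$ and some $\lambda\in(\sqrt{1/\alpha},1)$, $$\sqrt{\alpha\log A_{j_*}}\left(\frac{\Delta_k(1-\lambda)}{\sqrt{\zeta\alpha\log A_{2j_*}}}-\frac{2\sqrt2}{j_*^{\beta/2}}\right)\ge\Delta_k.$$ Then for any $i\in\{1,\ldots,n\}$, $$\mathbb P\left(T_k^{(i)}(A_{2j_*})<\frac{\zeta\alpha\log A_{2j_*}}{\Delta_k^2},\ \mathcal E_{j_*}^{(i)}\right)\le\frac{2\zeta\alpha\beta\log(j_* )\,j_*^{2\beta(1-\alpha\lambda^2)}}{\Delta_k^2(\alpha\lambda^2-1)}+\left(1-\frac1{nK}\right)^{j_*},$$ where $\mathcal E_{j_*}^{(i)}=\{T_1^{(i)}(A_{j_*})>j_*^\beta/2\}\cap\bigcap_{j=j_*}^{2j_*}\bigcup_{t=1+A_{j-1}}^{A_j}\{I_t^{(i)}=1\}$.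
   Context: Bandit: $K$ arms $1,\ldots,K$; arm $k$ yields Bernoulli$(\mu_k)$ rewards with $\mu_k\in(0,1)$, independent across agents and across pulls; $\mu_1>\mu_2\ge\cdots\ge\mu_K$, and $\Delta_k=\mu_1-\mu_k$. There are $n$ honest agents $1,\ldots,n$ and exactly one malicious agent $n+1$. All random variables live on a common probability space $(\Omega,\mathcal F,\mathbb P)$. For honest agent $i$, $I_t^{(i)}$ is the arm pulled at time $t\in\mathbb N$, $T_k^{(i)}(t)$ the number of pulls of arm $k$ by $i$ during times $1,\ldots,t$, and $\hat\mu_k^{(i)}(t)$ the average reward of those pulls. Algorithm (run by each honest agent $i$) with inputs $\alpha$, $\beta$ and a sticky set $\hat S^{(i)}\subset\{1,\ldots,K\}$ of size $S$: set $A_0=0$, $A_j=\lceil j^\beta\rceil$; phase $j$ consists of times $A_{j-1}+1,\ldots,A_j$. The initial active set is $S_1^{(i)}=\hat S^{(i)}\cup\{U_1^{(i)},L_1^{(i)}\}$ with $U_1^{(i)},L_1^{(i)}$ distinct arms not in $\hat S^{(i)}$. At each time $t$ in phase $j$, $i$ pulls $I_t^{(i)}\in\arg\max_{k\in S_j^{(i)}}\hat\mu_k^{(i)}(t-1)+\sqrt{\alpha\log(t)/T_k^{(i)}(t-1)}$. At $t=A_j$: $B_j^{(i)}\in\arg\max_{k\in S_j^{(i)}}T_k^{(i)}(A_j)-T_k^{(i)}(A_{j-1})$; there is no blocking, so an agent $H_j^{(i)}$ is drawn uniformly at random from $\{1,\ldots,n+1\}\setminus\{i\}$; if $H_j^{(i)}\le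 n$ the recommendation is $R_j^{(i)}=B_j^{(H_j^{(i)})}$, otherwise $R_j^{(i)}$ is uniformly random on $\{1,\ldots,K\}$ (independently of everything else). If $R_j^{(i)}\in S_j^{(i)}$ then $S_{j+1}^{(i)}=S_j^{(i)}$; otherwise $U_{j+1}^{(i)}\in\arg\max_{k\in\{U_j^{(i)},L_j^{(i)}\}}T_k^{(i)}(A_j)-T_k^{(i)}(A_{j-1})$, $L_{j+1}^{(i)}=R_j^{(i)}$, and $S_{j+1}^{(i)}=\hat S^{(i)}\cup\{U_{j+1}^{(i)},L_{j+1}^{(i)}\}$. *)

theory Defs
  imports "HOL-Probability.Probability"
begin

definition phase_end :: "real \<Rightarrow> nat \<Rightarrow> nat" where
  "phase_end \<beta> j = (if j = 0 then 0 else nat \<lceil>real j powr \<beta>\<rceil>)"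

definition pulls :: "(nat \<Rightarrow> nat \<Rightarrow> 'a \<Rightarrow> nat) \<Rightarrow> nat \<Rightarrow> nat \<Rightarrow> nat \<Rightarrow> 'a \<Rightarrow> nat" where
  "pulls I i k t \<omega> = card {s \<in> {1..t}. I i s \<omega> = k}"

(* Reward model ("reward stack"): Y i k m is the reward agent i receives on its m-th pull
   of arm k.  hat mu_k^{(i)}(t) is the average of the first T_k^{(i)}(t) entries. *)
definition emp_mean ::
  "(nat \<Rightarrow> nat \<Rightarrow> nat \<Rightarrow> 'a \<Rightarrow> nat) \<Rightarrow> (nat \<Rightarrow> nat \<Rightarrow> 'a \<Rightarrow> nat) \<Rightarrow> nat \<Rightarrow> nat \<Rightarrow> nat \<Rightarrow> 'a \<Rightarrow> real" where
  "emp_mean Y I i k t \<omega> =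
     (if pulls I i k t \<omega> = 0 then 0
      else (\<Sum>m = 1..pulls I i k t \<omega>. real (Y i k m \<omega>)) / real (pulls I i k t \<omega>))"

definition ucb ::
  "real \<Rightarrow> (nat \<Rightarrow> nat \<Rightarrow> nat \<Rightarrow> 'a \<Rightarrow> nat) \<Rightarrow> (nat \<Rightarrow> nat \<Rightarrow> 'a \<Rightarrow> nat) \<Rightarrow> nat \<Rightarrow> nat \<Rightarrow> nat \<Rightarrow> 'a \<Rightarrow> ereal" where
  "ucb \<alpha> Y I i k t \<omega> =
     (if pulls I i k (t - 1) \<omega> = 0 then \<infinity>
      else ereal (emp_mean Y I i k (t - 1) \<omega> + sqrt (\<alpha> * ln (real t) / real (pulls I i k (t - 1) \<omega>))))"

definition phase_pulls :: "real \<Rightarrow> (nat \<Rightarrow> nat \<Rightarrow> 'a \<Rightarrow> nat) \<Rightarrow> nat \<Rightarrow> nat \<Rightarrow> nat \<Rightarrow> 'a \<Rightarrow> nat" where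
  "phase_pulls \<beta> I i k j \<omega> = pulls I i k (phase_end \<beta> j) \<omega> - pulls I i k (phase_end \<beta> (j - 1)) \<omega>"

definition active :: "(nat \<Rightarrow> nat set) \<Rightarrow> (nat \<Rightarrow> nat \<Rightarrow> 'a \<Rightarrow> nat) \<Rightarrow> (nat \<Rightarrow> nat \<Rightarrow> 'a \<Rightarrow> nat) \<Rightarrow> nat \<Rightarrow> nat \<Rightarrow> 'a \<Rightarrow> nat set" where
  "active Shat U L i j \<omega> = Shat i \<union> {U i j \<omega>, L i j \<omega>}"

(* recommendation R_j^{(i)}: from honest agent H_j^{(i)} if H \<le> n, otherwise the uniformly random arm Z *)
definition recomm :: "nat \<Rightarrow> (nat \<Rightarrow> nat \<Rightarrow> 'a \<Rightarrow> nat) \<Rightarrow> (nat \<Rightarrow> nat \<Rightarrow> 'a \<Rightarrow> nat) \<Rightarrow> (nat \<Rightarrow> nat \<Rightarrow> 'a \<Rightarrow> nat) \<Rightarrow> nat \<Rightarrow> nat \<Rightarrow> 'a \<Rightarrow> nat" where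
  "recomm n H Z B i j \<omega> = (if H i j \<omega> \<le> n then B (H i j \<omega>) j \<omega> else Z i j \<omega>)"

definition prim :: "(nat \<Rightarrow> nat \<Rightarrow> nat \<Rightarrow> 'a \<Rightarrow> nat) \<Rightarrow> (nat \<Rightarrow> nat \<Rightarrow> 'a \<Rightarrow> nat) \<Rightarrow> (nat \<Rightarrow> nat \<Rightarrow> 'a \<Rightarrow> nat)
     \<Rightarrow> (nat \<times> nat \<times> nat) + ((nat \<times> nat) + (nat \<times> nat)) \<Rightarrow> 'a \<Rightarrow> nat" where
  "prim Y H Z x = (case x of Inl (i, k, m) \<Rightarrow> Y i k m
                            | Inr (Inl (i, j)) \<Rightarrow> H i j
                            | Inr (Inr (i, j)) \<Rightarrow> Z i j)"

definition prim_index :: "nat \<Rightarrow> nat \<Rightarrow> ((nat \<times> nat \<times> nat) + ((nat \<times> nat) + (nat \<times> nat))) set" where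
  "prim_index n K =
     Inl ` {(i, k, m). i \<in> {1..n} \<and> k \<in> {1..K} \<and> 1 \<le> m}
   \<union> Inr ` (Inl ` {(i, j). i \<in> {1..n} \<and> 1 \<le> j} \<union> Inr ` {(i, j). i \<in> {1..n} \<and> 1 \<le> j})"

definition primitives_ok ::
  "'a measure \<Rightarrow> nat \<Rightarrow> nat \<Rightarrow> (nat \<Rightarrow> real)
   \<Rightarrow> (nat \<Rightarrow> nat \<Rightarrow> nat \<Rightarrow> 'a \<Rightarrow> nat) \<Rightarrow> (nat \<Rightarrow> nat \<Rightarrow> 'a \<Rightarrow> nat) \<Rightarrow> (nat \<Rightarrow> nat \<Rightarrow> 'a \<Rightarrow> nat) \<Rightarrow> bool" where
  "primitives_ok M n K \<mu> Y H Z \<longleftrightarrow>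
     prob_space M \<and>
     prob_space.indep_vars M (\<lambda>_. count_space UNIV) (prim Y H Z) (prim_index n K) \<and>
     (\<forall>i\<in>{1..n}. \<forall>k\<in>{1..K}. \<forall>m\<ge>1.
         (\<forall>\<omega>\<in>space M. Y i k m \<omega> \<in> {0, 1}) \<and>
         measure M {\<omega> \<in> space M. Y i k m \<omega> = 1} = \<mu> k) \<and>
     (\<forall>i\<in>{1..n}. \<forall>j\<ge>1.
         (\<forall>\<omega>\<in>space M. H i j \<omega> \<in> {1..n+1} - {i}) \<and>
         (\<forall>h\<in>{1..n+1} - {i}. measure M {\<omega> \<in> space M. H i j \<omega> = h} = 1 / real n) \<and>
         (\<forall>\<omega>\<in>space M. Z i j \<omega> \<in> {1..K}) \<and>
         (\<forall>a\<in>{1..K}. measure M {\<omega> \<in> space M. Z i j \<omega> = a} = 1 / real K))"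

(* The honest agents run the algorithm (with arbitrary tie-breaking in every argmax). *)
definition algorithm_run ::
  "'a measure \<Rightarrow> nat \<Rightarrow> nat \<Rightarrow> real \<Rightarrow> real \<Rightarrow> (nat \<Rightarrow> nat set) \<Rightarrow> (nat \<Rightarrow> nat) \<Rightarrow> (nat \<Rightarrow> nat)
   \<Rightarrow> (nat \<Rightarrow> nat \<Rightarrow> nat \<Rightarrow> 'a \<Rightarrow> nat) \<Rightarrow> (nat \<Rightarrow> nat \<Rightarrow> 'a \<Rightarrow> nat) \<Rightarrow> (nat \<Rightarrow> nat \<Rightarrow> 'a \<Rightarrow> nat)
   \<Rightarrow> (nat \<Rightarrow> nat \<Rightarrow> 'a \<Rightarrow> nat) \<Rightarrow> (nat \<Rightarrow> nat \<Rightarrow> 'a \<Rightarrow> nat) \<Rightarrow> (nat \<Rightarrow> nat \<Rightarrow> 'a \<Rightarrow> nat)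
   \<Rightarrow> (nat \<Rightarrow> nat \<Rightarrow> 'a \<Rightarrow> nat) \<Rightarrow> bool" where
  "algorithm_run M n K \<alpha> \<beta> Shat u1 l1 Y H Z I U L B \<longleftrightarrow>
     (\<forall>i\<in>{1..n}. \<forall>t. I i t \<in> measurable M (count_space UNIV)) \<and>
     (\<forall>i\<in>{1..n}. \<forall>\<omega>\<in>space M.
        U i 1 \<omega> = u1 i \<and> L i 1 \<omega> = l1 i \<and>
        (\<forall>j\<ge>1.
           (\<forall>t\<in>{phase_end \<beta> (j - 1) + 1 .. phase_end \<beta> j}.
              I i t \<omega> \<in> active Shat U L i j \<omega> \<and>
              (\<forall>k\<in>active Shat U L i j \<omega>. ucb \<alpha> Y I i k t \<omega> \<le> ucb \<alpha> Y I i (I i t \<omega>) t \<omega>)) \<and>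
           B i j \<omega> \<in> active Shat U L i j \<omega> \<and>
           (\<forall>k\<in>active Shat U L i j \<omega>. phase_pulls \<beta> I i k j \<omega> \<le> phase_pulls \<beta> I i (B i j \<omega>) j \<omega>) \<and>
           (if recomm n H Z B i j \<omega> \<in> active Shat U L i j \<omega>
            then U i (j + 1) \<omega> = U i j \<omega> \<and> L i (j + 1) \<omega> = L i j \<omega>
            else U i (j + 1) \<omega> \<in> {U i j \<omega>, L i j \<omega>} \<and>
                 phase_pulls \<beta> I i (U i j \<omega>) j \<omega> \<le> phase_pulls \<beta> I i (U i (j + 1) \<omega>) j \<omega> \<and>
                 phase_pulls \<beta> I i (L i j \<omega>) j \<omega> \<le> phase_pulls \<beta> I i (U i (j + 1) \<omega>) j \<omega> \<and>
                 L i (j + 1) \<omega> = recomm n H Z B i j \<omega>)))"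

end

theory Submission
  imports Defs
begin


lemma div_le_iff_aux: "(s::real) > 0 \<Longrightarrow> (x / s \<le> p - e) = (x \<le> s * p - s * e)"
proof -
  assume s: "s > 0"
  have "(x / s \<le> p - e) = (x \<le> (p - e) * s)" by (rule pos_divide_le_eq[OF s])
  also have "(p - e) * s = s * p - s * e" by (simp add: algebra_simps)
  finally show ?thesis .
qed
lemma div_ge_iff_aux: "(s::real) > 0 \<Longrightarrow> (x / s \<ge> p + e) = (x \<ge> s * p + s * e)"
proof -
  assume s: "s > 0"
  have "(x / s \<ge> p + e) = ((p + e) * s \<le> x)" by (rule pos_le_divide_eq[OF s])
  also have "(p + e) * s = s * p + s * e" by (simp add: algebra_simps)
  finally show ?thesis .
qed

context prob_space begin

lemma prim_meas:
  assumes ind: "indep_vars (\<lambda>_. count_space UNIV) (prim Y H Z) (prim_index n K)"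
    and x: "x \<in> prim_index n K"
  shows "prim Y H Z x \<in> measurable M (count_space UNIV)"
  using ind x by (auto simp: indep_vars_def)

lemma Y_meas:
  assumes ind: "indep_vars (\<lambda>_. count_space UNIV) (prim Y H Z) (prim_index n K)"
    and "i \<in> {1..n}" "c \<in> {1..K}" "1 \<le> m"
  shows "Y i c m \<in> measurable M (count_space UNIV)"
proof -
  have "Inl (i, c, m) \<in> prim_index n K" using assms by (auto simp: prim_index_def)
  from prim_meas[OF ind this] show ?thesis by (simp add: prim_def)
qed

lemma hoeff_both:
  assumes ind: "indep_vars (\<lambda>_. count_space UNIV) (prim Y H Z) (prim_index n K)"
    and i: "i \<in> {1..n}" and c: "c \<in> {1..K}" and s: "1 \<le> s"
    and Yv: "\<forall>m\<ge>1. (\<forall>\<omega>\<in>space M. Y i c m \<omega> \<in> {0, 1}) \<and> measure M {\<omega> \<in> space M. Y i c m \<omega> = 1} = p"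
    and eps: "\<epsilon> \<ge> 0"
  shows "prob {\<omega>\<in>space M. (\<Sum>m=1..s. real (Y i c m \<omega>)) / real s \<le> p - \<epsilon>} \<le> exp (-2 * real s * \<epsilon>\<^sup>2)"
    and "prob {\<omega>\<in>space M. (\<Sum>m=1..s. real (Y i c m \<omega>)) / real s \<ge> p + \<epsilon>} \<le> exp (-2 * real s * \<epsilon>\<^sup>2)"
proof -
  define I :: "((nat \<times> nat \<times> nat) + ((nat \<times> nat) + (nat \<times> nat))) set" where "I = (\<lambda>m. Inl (i, c, m)) ` {1..s}"
  define X where "X = (\<lambda>x \<omega>. real (prim Y H Z x \<omega>))"
  have Isub: "I \<subseteq> prim_index n K" using i c by (auto simp: I_def prim_index_def)
  have inj: "inj_on (\<lambda>m. Inl (i, c, m)) {1..s}" by (auto simp: inj_on_def)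
  have cI: "card I = s" unfolding I_def using card_image[OF inj] by simp
  have indX: "indep_vars (\<lambda>_. borel) X I"
    unfolding X_def
    by (rule indep_vars_compose2[OF indep_vars_subset[OF ind Isub]]) auto
  have Ymeas: "\<And>m. 1 \<le> m \<Longrightarrow> Y i c m \<in> measurable M (count_space UNIV)"
    using Y_meas[OF ind i c] .
  have ev: "\<And>m \<omega>. 1 \<le> m \<Longrightarrow> \<omega> \<in> space M \<Longrightarrow> real (Y i c m \<omega>) = indicator {\<omega> \<in> space M. Y i c m \<omega> = 1} \<omega>"
    using Yv by (force simp: indicator_def)
  have setm: "\<And>m. 1 \<le> m \<Longrightarrow> {\<omega> \<in> space M. Y i c m \<omega> = 1} \<in> sets M"
  proof -
    fix m :: nat assume "1 \<le> m"
    then have "Y i c m \<in> measurable M (count_space UNIV)" by (rule Ymeas)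
    then show "{\<omega> \<in> space M. Y i c m \<omega> = 1} \<in> sets M" by measurable
  qed
  have EX: "\<And>x. x \<in> I \<Longrightarrow> expectation (X x) = p"
  proof -
    fix x assume "x \<in> I"
    then obtain m where m: "1 \<le> m" "x = Inl (i, c, m)" by (auto simp: I_def)
    have "expectation (X x) = expectation (indicator {\<omega> \<in> space M. Y i c m \<omega> = 1})"
      by (rule Bochner_Integration.integral_cong[OF refl]) (auto simp: X_def m prim_def ev[OF m(1)])
    also have "\<dots> = p" using setm[OF m(1)] Yv m(1) by simp
    finally show "expectation (X x) = p" .
  qed
  interpret Hoeffding_ineq M I X "\<lambda>_. 0" "\<lambda>_. 1" "real s * p"
  proof unfold_locales
    show "finite I" by (simp add: I_def)
    show "indep_vars (\<lambda>_. borel) X I" by (rule indX)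
    show "\<And>x. x \<in> I \<Longrightarrow> AE \<omega> in M. X x \<omega> \<in> {0..1}"
    proof -
      fix x assume "x \<in> I"
      then obtain m where m: "1 \<le> m" "x = Inl (i, c, m)" by (auto simp: I_def)
      have "\<forall>\<omega>\<in>space M. X x \<omega> \<in> {0..1}" using Yv m by (force simp: X_def prim_def)
      then show "AE \<omega> in M. X x \<omega> \<in> {0..1}" by (intro AE_I2) auto
    qed
    show "real s * p \<equiv> \<Sum>x\<in>I. expectation (X x)"
    proof -
      have "(\<Sum>x\<in>I. expectation (X x)) = (\<Sum>x\<in>I. p)" using EX by (rule sum.cong[OF refl])
      also have "\<dots> = real s * p" by (simp add: cI)
      finally show "real s * p \<equiv> \<Sum>x\<in>I. expectation (X x)" by simp
    qed
  qed
  have sumI: "\<And>\<omega>. (\<Sum>x\<in>I. X x \<omega>) = (\<Sum>m=1..s. real (Y i c m \<omega>))"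
    unfolding I_def using sum.reindex[OF inj, of "\<lambda>x. X x \<omega>" for \<omega>] by (simp add: X_def prim_def)
  have cardI: "(\<Sum>x\<in>I. (1 - 0::real)\<^sup>2) = real s" by (simp add: cI)
  have spos: "real s > 0" using s by simp
  have e2: "exp (-2 * (real s * \<epsilon>)\<^sup>2 / real s) = exp (-2 * real s * \<epsilon>\<^sup>2)"
    using spos by (simp add: power2_eq_square field_simps)
  have "prob {\<omega>\<in>space M. (\<Sum>m=1..s. real (Y i c m \<omega>)) / real s \<le> p - \<epsilon>}
      = prob {\<omega>\<in>space M. (\<Sum>x\<in>I. X x \<omega>) \<le> real s * p - real s * \<epsilon>}"
    unfolding sumI using spos by (intro arg_cong[where f=prob] Collect_cong conj_cong refl) (simp only: div_le_iff_aux)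
  also have "\<dots> \<le> exp (-2 * (real s * \<epsilon>)\<^sup>2 / real s)"
    using Hoeffding_ineq_le[of "real s * \<epsilon>"] eps spos cardI by simp
  finally show "prob {\<omega>\<in>space M. (\<Sum>m=1..s. real (Y i c m \<omega>)) / real s \<le> p - \<epsilon>} \<le> exp (-2 * real s * \<epsilon>\<^sup>2)"
    using e2 by simp
  have "prob {\<omega>\<in>space M. (\<Sum>m=1..s. real (Y i c m \<omega>)) / real s \<ge> p + \<epsilon>}
      = prob {\<omega>\<in>space M. (\<Sum>x\<in>I. X x \<omega>) \<ge> real s * p + real s * \<epsilon>}"
    unfolding sumI using spos by (intro arg_cong[where f=prob] Collect_cong conj_cong refl) (simp only: div_ge_iff_aux)
  also have "\<dots> \<le> exp (-2 * (real s * \<epsilon>)\<^sup>2 / real s)"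
    using Hoeffding_ineq_ge[of "real s * \<epsilon>"] eps spos cardI by simp
  finally show "prob {\<omega>\<in>space M. (\<Sum>m=1..s. real (Y i c m \<omega>)) / real s \<ge> p + \<epsilon>} \<le> exp (-2 * real s * \<epsilon>\<^sup>2)"
    using e2 by simp
qed

lemma HZ_prob:
  assumes ind: "indep_vars (\<lambda>_. count_space UNIV) (prim Y H Z) (prim_index n K)"
    and i: "i \<in> {1..n}" and j: "1 \<le> j"
  shows "prob {\<omega>\<in>space M. H i j \<omega> = h \<and> Z i j \<omega> = a} = prob {\<omega>\<in>space M. H i j \<omega> = h} * prob {\<omega>\<in>space M. Z i j \<omega> = a}"
proof -
  define x1 :: "(nat \<times> nat \<times> nat) + ((nat \<times> nat) + (nat \<times> nat))" where "x1 = Inr (Inl (i, j))"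
  define x2 :: "(nat \<times> nat \<times> nat) + ((nat \<times> nat) + (nat \<times> nat))" where "x2 = Inr (Inr (i, j))"
  define A where "A = (\<lambda>x. if x = x1 then {h} else {a})"
  have ne: "x1 \<noteq> x2" by (simp add: x1_def x2_def)
  have sub: "{x1, x2} \<subseteq> prim_index n K" using i j by (auto simp: x1_def x2_def prim_index_def)
  have "prob (\<Inter>x\<in>{x1, x2}. prim Y H Z x -` A x \<inter> space M) = (\<Prod>x\<in>{x1, x2}. prob (prim Y H Z x -` A x \<inter> space M))"
    by (rule indep_varsD[OF ind]) (use sub in auto)
  moreover have "(\<Inter>x\<in>{x1, x2}. prim Y H Z x -` A x \<inter> space M) = {\<omega>\<in>space M. H i j \<omega> = h \<and> Z i j \<omega> = a}"
    using ne by (auto simp: A_def x1_def x2_def prim_def)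
  moreover have "prim Y H Z x1 -` A x1 \<inter> space M = {\<omega>\<in>space M. H i j \<omega> = h}"
    by (auto simp: A_def x1_def prim_def)
  moreover have "prim Y H Z x2 -` A x2 \<inter> space M = {\<omega>\<in>space M. Z i j \<omega> = a}"
    using ne by (auto simp: A_def x2_def prim_def)
  ultimately show ?thesis using ne by simp
qed

lemma N_prob:
  assumes ind: "indep_vars (\<lambda>_. count_space UNIV) (prim Y H Z) (prim_index n K)"
    and i: "i \<in> {1..n}" and J: "1 \<le> J"
    and pj: "\<And>j. 1 \<le> j \<Longrightarrow> prob {\<omega>\<in>space M. H i j \<omega> = h \<and> Z i j \<omega> = a} = q"
  shows "prob {\<omega>\<in>space M. \<forall>j\<in>{J..<2*J}. \<not> (H i j \<omega> = h \<and> Z i j \<omega> = a)} = (1 - q) ^ J"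
proof -
  define L where "L = {J..<2*J}"
  define Kf :: "nat \<Rightarrow> ((nat \<times> nat \<times> nat) + ((nat \<times> nat) + (nat \<times> nat))) set"
    where "Kf = (\<lambda>j. {Inr (Inl (i, j)), Inr (Inr (i, j))})"
  define g where "g = (\<lambda>j (f :: ((nat \<times> nat \<times> nat) + ((nat \<times> nat) + (nat \<times> nat))) \<Rightarrow> nat).
      f (Inr (Inl (i, j))) = h \<and> f (Inr (Inr (i, j))) = a)"
  have ind1: "indep_vars (\<lambda>j. PiM (Kf j) (\<lambda>_. count_space UNIV)) (\<lambda>j \<omega>. restrict (\<lambda>x. prim Y H Z x \<omega>) (Kf j)) L"
    by (rule indep_vars_restrict[OF ind]) (use i J in \<open>auto simp: Kf_def L_def prim_index_def disjoint_family_on_def\<close>)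
  have gm: "g j \<in> measurable (PiM (Kf j) (\<lambda>_. count_space UNIV)) (count_space UNIV)" for j
  proof -
    have "Inr (Inl (i, j)) \<in> Kf j" "Inr (Inr (i, j)) \<in> Kf j" by (auto simp: Kf_def)
    then show ?thesis unfolding g_def by measurable
  qed
  have ind2: "indep_vars (\<lambda>_. count_space UNIV) (\<lambda>j \<omega>. g j (restrict (\<lambda>x. prim Y H Z x \<omega>) (Kf j))) L"
    by (rule indep_vars_compose2[OF ind1 gm])
  have Lne: "L \<noteq> {}" "finite L" using J by (auto simp: L_def)
  have "prob (\<Inter>j\<in>L. (\<lambda>\<omega>. g j (restrict (\<lambda>x. prim Y H Z x \<omega>) (Kf j))) -` {False} \<inter> space M)
      = (\<Prod>j\<in>L. prob ((\<lambda>\<omega>. g j (restrict (\<lambda>x. prim Y H Z x \<omega>) (Kf j))) -` {False} \<inter> space M))"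
    by (rule indep_varsD[OF ind2 Lne(1) Lne(2)]) auto
  moreover have "(\<Inter>j\<in>L. (\<lambda>\<omega>. g j (restrict (\<lambda>x. prim Y H Z x \<omega>) (Kf j))) -` {False} \<inter> space M)
      = {\<omega>\<in>space M. \<forall>j\<in>{J..<2*J}. \<not> (H i j \<omega> = h \<and> Z i j \<omega> = a)}"
    using Lne(1) by (auto simp: L_def g_def Kf_def prim_def)
  moreover have "prob ((\<lambda>\<omega>. g j (restrict (\<lambda>x. prim Y H Z x \<omega>) (Kf j))) -` {False} \<inter> space M) = 1 - q"
    if "j \<in> L" for j
  proof -
    have j1: "1 \<le> j" using that J by (auto simp: L_def)
    have Hm: "H i j \<in> measurable M (count_space UNIV)"
    proof -
      have "Inr (Inl (i, j)) \<in> prim_index n K" using i j1 by (auto simp: prim_index_def)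
      from prim_meas[OF ind this] show ?thesis by (simp add: prim_def)
    qed
    have Zm: "Z i j \<in> measurable M (count_space UNIV)"
    proof -
      have "Inr (Inr (i, j)) \<in> prim_index n K" using i j1 by (auto simp: prim_index_def)
      from prim_meas[OF ind this] show ?thesis by (simp add: prim_def)
    qed
    have S: "{\<omega>\<in>space M. H i j \<omega> = h \<and> Z i j \<omega> = a} \<in> sets M" using Hm Zm by measurable
    have "(\<lambda>\<omega>. g j (restrict (\<lambda>x. prim Y H Z x \<omega>) (Kf j))) -` {False} \<inter> space M
        = space M - {\<omega>\<in>space M. H i j \<omega> = h \<and> Z i j \<omega> = a}"
      by (auto simp: g_def Kf_def prim_def)
    then show ?thesis using prob_compl[OF S] pj[OF j1] by simp
  qed
  ultimately show ?thesis using J by (simp add: L_def)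
qed


lemma mean_sets:
  assumes ind: "indep_vars (\<lambda>_. count_space UNIV) (prim Y H Z) (prim_index n K)"
    and i: "i \<in> {1..n}" and c: "c \<in> {1..K}"
  shows "{\<omega>\<in>space M. (\<Sum>m=1..s. real (Y i c m \<omega>)) / real s \<le> x} \<in> sets M"
    and "{\<omega>\<in>space M. (\<Sum>m=1..s. real (Y i c m \<omega>)) / real s \<ge> x} \<in> sets M"
proof -
  have t: "(\<lambda>\<omega>. real (Y i c m \<omega>)) \<in> borel_measurable M" if "m \<in> {1..s}" for m
  proof -
    have "Y i c m \<in> measurable M (count_space UNIV)" using Y_meas[OF ind i c] that by auto
    moreover have "real \<in> measurable (count_space UNIV) borel" by (simp add: measurable_count_space_eq1)
    ultimately show ?thesis using measurable_compose by blast
  qed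
  have f[measurable]: "(\<lambda>\<omega>. (\<Sum>m=1..s. real (Y i c m \<omega>)) / real s) \<in> borel_measurable M"
    by (intro borel_measurable_divide borel_measurable_sum t borel_measurable_const) auto
  show "{\<omega>\<in>space M. (\<Sum>m=1..s. real (Y i c m \<omega>)) / real s \<le> x} \<in> sets M" by measurable
  show "{\<omega>\<in>space M. (\<Sum>m=1..s. real (Y i c m \<omega>)) / real s \<ge> x} \<in> sets M" by measurable
qed

lemma HZ_sets:
  assumes ind: "indep_vars (\<lambda>_. count_space UNIV) (prim Y H Z) (prim_index n K)"
    and i: "i \<in> {1..n}" and j: "1 \<le> j"
  shows "{\<omega>\<in>space M. H i j \<omega> = h \<and> Z i j \<omega> = a} \<in> sets M"
proof -
  have "Inr (Inl (i, j)) \<in> prim_index n K" "Inr (Inr (i, j)) \<in> prim_index n K" using i j by (auto simp: prim_index_def)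
  from prim_meas[OF ind this(1)] prim_meas[OF ind this(2)]
  have [measurable]: "H i j \<in> measurable M (count_space UNIV)" "Z i j \<in> measurable M (count_space UNIV)"
    by (simp_all add: prim_def)
  show ?thesis by measurable
qed

end


lemma powr_step:
  fixes p x :: real
  assumes p: "p > 1" and x: "x \<ge> 1"
  shows "(p - 1) * (x + 1) powr (-p) \<le> x powr (1 - p) - (x + 1) powr (1 - p)"
proof -
  have d: "\<And>y. x \<le> y \<Longrightarrow> y \<le> x + 1 \<Longrightarrow> ((\<lambda>y. y powr (1 - p)) has_real_derivative (1 - p) * y powr (1 - p - 1)) (at y)"
    using x by (intro has_real_derivative_powr) auto
  obtain z where z: "x < z" "z < x + 1" "(x + 1) powr (1 - p) - x powr (1 - p) = (x + 1 - x) * ((1 - p) * z powr (1 - p - 1))"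
    using MVT2[of x "x+1" "\<lambda>y. y powr (1 - p)" "\<lambda>y. (1 - p) * y powr (1 - p - 1)"] d by auto
  have "(x + 1) powr (-p) \<le> z powr (-p)"
    using z x p by (intro powr_mono2') auto
  then have "(p - 1) * (x + 1) powr (-p) \<le> (p - 1) * z powr (-p)"
    using p by (intro mult_left_mono) auto
  also have "\<dots> = x powr (1 - p) - (x + 1) powr (1 - p)"
    using z(3) by (simp add: algebra_simps)
  finally show ?thesis .
qed

lemma tele_aux:
  fixes p u A B C :: real
  assumes "p > 1" "(p - 1) * u \<le> B - C"
  shows "u + (A - B) / (p - 1) \<le> (A - C) / (p - 1)"
proof -
  have "u \<le> (B - C) / (p - 1)" using assms by (simp add: pos_le_divide_eq mult.commute)
  then show ?thesis by (simp add: diff_divide_distrib)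
qed

lemma tele_sum:
  fixes p :: real and a b :: nat
  assumes p: "p > 1" and a: "1 \<le> a" and ab: "a \<le> b"
  shows "(\<Sum>t\<in>{a+1..b}. real t powr (-p)) \<le> (real a powr (1 - p) - real b powr (1 - p)) / (p - 1)"
  using ab
proof (induction b rule: dec_induct)
  case base
  then show ?case by simp
next
  case (step b)
  have b1: "real b \<ge> 1" using a step.hyps by simp
  have "{a+1..Suc b} = insert (Suc b) {a+1..b}" using step.hyps by auto
  then have "(\<Sum>t\<in>{a+1..Suc b}. real t powr (-p)) = real (Suc b) powr (-p) + (\<Sum>t\<in>{a+1..b}. real t powr (-p))"
    by simp
  also have "\<dots> \<le> real (Suc b) powr (-p) + (real a powr (1 - p) - real b powr (1 - p)) / (p - 1)"
    using step.IH by simp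
  also have "\<dots> \<le> (real a powr (1 - p) - real (Suc b) powr (1 - p)) / (p - 1)"
    using tele_aux[OF p] powr_step[OF p b1] by (simp add: add.commute)
  finally show ?case .
qed

lemma tele_sum2:
  fixes p :: real and a b :: nat
  assumes p: "p > 1" and a: "1 \<le> a"
  shows "(\<Sum>t\<in>{a+1..b}. real t powr (-p)) \<le> real a powr (1 - p) / (p - 1)"
proof (cases "a \<le> b")
  case True
  have "real b powr (1 - p) \<ge> 0" by simp
  then show ?thesis using tele_sum[OF p a True] p by (smt (verit) divide_right_mono)
next
  case False
  then have "{a+1..b} = {}" by auto
  then show ?thesis using p by simp
qed



lemma key_arith:
  fixes \<alpha> L L1 La2 \<zeta> \<Delta> lam P Q s u mk m1 muk mu1 :: real
  assumes al: "\<alpha> > 0" and L1: "L1 > 0" and LL: "L \<ge> L1" and La2: "La2 > 0" and ze: "\<zeta> > 0"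
    and D: "\<Delta> > 0" "\<Delta> = mu1 - muk" and lam: "lam < 1"
    and P: "P > 0" and Q: "Q > 0" "Q * Q = P"
    and s: "s > 0" "s < \<zeta> * \<alpha> * La2 / \<Delta>\<^sup>2" and u: "u > P / 2"
    and cond: "sqrt (\<alpha> * L1) * (\<Delta> * (1 - lam) / sqrt (\<zeta> * \<alpha> * La2) - 2 * sqrt 2 / Q) \<ge> \<Delta>"
    and ineq: "mk + sqrt (\<alpha> * L / s) \<le> m1 + sqrt (\<alpha> * L / u)"
  shows "mk \<le> muk - lam * sqrt (\<alpha> * L / s) \<or> m1 \<ge> mu1 + sqrt (2 * \<alpha> * L / P)"
proof (rule ccontr)
  assume "\<not> ?thesis"
  then have h1: "mk > muk - lam * sqrt (\<alpha> * L / s)" and h2: "m1 < mu1 + sqrt (2 * \<alpha> * L / P)" by auto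
  define rs where "rs = sqrt (\<alpha> * L / s)"
  define e where "e = sqrt (2 * \<alpha> * L / P)"
  define Bk where "Bk = \<Delta> * (1 - lam) / sqrt (\<zeta> * \<alpha> * La2) - 2 * sqrt 2 / Q"
  have Lpos: "L > 0" using L1 LL by simp
  have upos: "u > 0" using u P by simp
  have "\<alpha> * L / u \<le> 2 * \<alpha> * L / P"
  proof -
    have "\<alpha> * L / u = (\<alpha> * L) * (1 / u)" by simp
    also have "\<dots> \<le> (\<alpha> * L) * (2 / P)"
      using u P upos al Lpos by (intro mult_left_mono) (auto simp: field_simps)
    finally show ?thesis by (simp add: mult_ac)
  qed
  then have ru: "sqrt (\<alpha> * L / u) \<le> e" unfolding e_def by (rule real_sqrt_le_mono)
  have h1': "mk > muk - lam * rs" using h1 by (simp add: rs_def)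
  have h2': "m1 < mu1 + e" using h2 by (simp add: e_def)
  have i': "mk + rs \<le> m1 + sqrt (\<alpha> * L / u)" using ineq by (simp add: rs_def)
  have A: "(1 - lam) * rs - 2 * e < \<Delta>" using h1' h2' i' ru D by (simp add: algebra_simps)
  have sq: "sqrt (\<zeta> * \<alpha> * La2) > 0" using ze al La2 by simp
  have rsb: "rs \<ge> sqrt (\<alpha> * L) * \<Delta> / sqrt (\<zeta> * \<alpha> * La2)"
  proof -
    have "s * \<Delta>\<^sup>2 < \<zeta> * \<alpha> * La2" using s D(1) by (simp add: pos_less_divide_eq)
    then have f: "\<Delta>\<^sup>2 / (\<zeta> * \<alpha> * La2) \<le> 1 / s"
      using s al Lpos ze La2 D(1) by (simp add: frac_le_eq mult.commute) (intro divide_nonpos_pos, auto)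
    have "\<alpha> * L * \<Delta>\<^sup>2 / (\<zeta> * \<alpha> * La2) = (\<alpha> * L) * (\<Delta>\<^sup>2 / (\<zeta> * \<alpha> * La2))" by simp
    also have "\<dots> \<le> (\<alpha> * L) * (1 / s)" using f al Lpos by (intro mult_left_mono) auto
    finally have "\<alpha> * L * \<Delta>\<^sup>2 / (\<zeta> * \<alpha> * La2) \<le> \<alpha> * L / s" by simp
    then have "sqrt (\<alpha> * L * \<Delta>\<^sup>2 / (\<zeta> * \<alpha> * La2)) \<le> rs" unfolding rs_def by (rule real_sqrt_le_mono)
    moreover have "sqrt (\<alpha> * L * \<Delta>\<^sup>2 / (\<zeta> * \<alpha> * La2)) = sqrt (\<alpha> * L) * \<Delta> / sqrt (\<zeta> * \<alpha> * La2)"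
      using D by (simp add: real_sqrt_mult real_sqrt_divide)
    ultimately show ?thesis by simp
  qed
  have eq: "e = sqrt (\<alpha> * L) * sqrt 2 / Q"
  proof -
    have "sqrt P = sqrt (Q * Q)" using Q(2) by simp
    also have "\<dots> = \<bar>Q\<bar>" by (rule real_sqrt_abs2)
    also have "\<dots> = Q" using Q(1) by simp
    finally have sP: "sqrt P = Q" .
    have "e = sqrt (2 * (\<alpha> * L)) / sqrt P" unfolding e_def by (simp add: real_sqrt_divide mult.assoc)
    also have "\<dots> = sqrt 2 * sqrt (\<alpha> * L) / Q" by (simp add: sP real_sqrt_mult)
    finally show ?thesis by simp
  qed
  have "(1 - lam) * rs - 2 * e \<ge> sqrt (\<alpha> * L) * Bk"
  proof -
    have "(1 - lam) * rs \<ge> (1 - lam) * (sqrt (\<alpha> * L) * \<Delta> / sqrt (\<zeta> * \<alpha> * La2))"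
      using rsb lam by (intro mult_left_mono) auto
    then show ?thesis unfolding Bk_def eq by (simp add: algebra_simps)
  qed
  moreover have "sqrt (\<alpha> * L1) * Bk \<ge> \<Delta>" using cond unfolding Bk_def .
  moreover have "Bk > 0"
  proof (rule ccontr)
    assume "\<not> Bk > 0"
    then have "sqrt (\<alpha> * L1) * Bk \<le> 0" using al L1 by (simp add: mult_nonneg_nonpos)
    then show False using \<open>sqrt (\<alpha> * L1) * Bk \<ge> \<Delta>\<close> D by simp
  qed
  moreover have "sqrt (\<alpha> * L1) \<le> sqrt (\<alpha> * L)" using LL al by simp
  ultimately have "(1 - lam) * rs - 2 * e \<ge> \<Delta>"
  proof -
    assume a: "(1 - lam) * rs - 2 * e \<ge> sqrt (\<alpha> * L) * Bk" "sqrt (\<alpha> * L1) * Bk \<ge> \<Delta>" "Bk > 0"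
      "sqrt (\<alpha> * L1) \<le> sqrt (\<alpha> * L)"
    have "sqrt (\<alpha> * L1) * Bk \<le> sqrt (\<alpha> * L) * Bk" using a(3,4) by (intro mult_right_mono) auto
    then show ?thesis using a(1,2) by linarith
  qed
  then show False using A by simp
qed



lemma final_arith:
  fixes \<alpha> c P a1 \<tau> C W :: real
  assumes c: "c > 1" and ac: "\<alpha> \<ge> c" and P: "P \<ge> 3" and a1: "a1 \<ge> P"
    and tC: "\<tau> \<le> C" and t1: "\<tau> > 1" and W: "W = P powr (2 * (1 - c))"
  shows "\<tau> * (a1 powr (1 - 2 * c) / (2 * c - 1)) + a1 powr (1 - (2 * \<alpha> - 1)) / (2 * \<alpha> - 1 - 1)
         \<le> C * W / (c - 1)"
proof -
  have Ppos: "P > 0" using P by simp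
  have Wpos: "W \<ge> 0" using W by simp
  have C1: "C \<ge> 1" using tC t1 by simp
  have e1: "a1 powr (1 - 2 * c) \<le> P powr (1 - 2 * c)"
    using a1 Ppos c by (intro powr_mono2') auto
  have e2: "P powr (1 - 2 * c) = W / P"
  proof -
    have "P powr (1 - 2 * c) = P powr (2 * (1 - c) - 1)" by (simp add: algebra_simps)
    also have "\<dots> = P powr (2 * (1 - c)) / P powr 1" by (rule powr_diff)
    finally show ?thesis using Ppos W by simp
  qed
  have T1: "\<tau> * (a1 powr (1 - 2 * c) / (2 * c - 1)) \<le> C * W / (2 * (c - 1))"
  proof -
    have "\<tau> * (a1 powr (1 - 2 * c) / (2 * c - 1)) \<le> C * ((W / P) / (2 * c - 1))"
      using e1 e2 tC t1 c by (intro mult_mono divide_right_mono) auto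
    also have "(W / P) / (2 * c - 1) \<le> W / (2 * (c - 1))"
    proof -
      have "1 * (2 * c - 1) \<le> P * (2 * c - 1)" using P c by (intro mult_right_mono) auto
      then have "2 * (c - 1) \<le> P * (2 * c - 1)" by simp
      then show ?thesis using Wpos Ppos c by (simp add: divide_divide_eq_left frac_le mult.commute)
    qed
    then have "C * ((W / P) / (2 * c - 1)) \<le> C * (W / (2 * (c - 1)))" using C1 by (intro mult_left_mono) auto
    finally show ?thesis by simp
  qed
  have T2: "a1 powr (1 - (2 * \<alpha> - 1)) / (2 * \<alpha> - 1 - 1) \<le> C * W / (2 * (c - 1))"
  proof -
    have "a1 powr (1 - (2 * \<alpha> - 1)) \<le> P powr (1 - (2 * \<alpha> - 1))"
      using a1 Ppos c ac by (intro powr_mono2') auto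
    also have "\<dots> \<le> W" unfolding W using P ac by (intro powr_mono) auto
    finally have "a1 powr (1 - (2 * \<alpha> - 1)) / (2 * \<alpha> - 1 - 1) \<le> W / (2 * \<alpha> - 1 - 1)"
      using c ac by (intro divide_right_mono) auto
    also have "\<dots> \<le> W / (2 * (c - 1))" using Wpos c ac by (intro divide_left_mono) auto
    also have "\<dots> \<le> C * W / (2 * (c - 1))" using C1 Wpos c
      by (intro divide_right_mono) (auto simp: mult_le_cancel_right1 mult_right_mono)
    finally show ?thesis .
  qed
  have "C * W / (2 * (c - 1)) + C * W / (2 * (c - 1)) = C * W / (c - 1)"
  proof -
    have "C * W / (2 * (c - 1)) = (C * W / (c - 1)) / 2" by simp
    then show ?thesis by (metis field_sum_of_halves)
  qed
  moreover have "\<tau> * (a1 powr (1 - 2 * c) / (2 * c - 1)) + a1 powr (1 - (2 * \<alpha> - 1)) / (2 * \<alpha> - 1 - 1)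
      \<le> C * W / (2 * (c - 1)) + C * W / (2 * (c - 1))" using T1 T2 by (rule add_mono)
  ultimately show ?thesis by simp
qed


lemma pulls_mono: "t \<le> t' \<Longrightarrow> pulls I i c t \<omega> \<le> pulls I i c t' \<omega>"
  unfolding pulls_def by (intro card_mono) auto

lemma pulls_le: "pulls I i c t \<omega> \<le> t"
proof -
  have "pulls I i c t \<omega> \<le> card {1..t}" unfolding pulls_def by (intro card_mono) auto
  then show ?thesis by simp
qed

lemma phase_end_mono:
  assumes "j \<le> j'" "\<beta> > 0"
  shows "phase_end \<beta> j \<le> phase_end \<beta> j'"
proof (cases "j = 0")
  case True then show ?thesis by (simp add: phase_end_def)
next
  case False
  then have "real j powr \<beta> \<le> real j' powr \<beta>" using assms by (intro powr_mono2) auto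
  then have "\<lceil>real j powr \<beta>\<rceil> \<le> \<lceil>real j' powr \<beta>\<rceil>" by (rule ceiling_mono)
  then have "nat \<lceil>real j powr \<beta>\<rceil> \<le> nat \<lceil>real j' powr \<beta>\<rceil>" by (rule nat_mono)
  moreover have "j' \<noteq> 0" using False assms by auto
  ultimately show ?thesis using False by (simp add: phase_end_def)
qed

lemma mu_mono:
  fixes \<mu> :: "nat \<Rightarrow> real" and K a :: nat
  assumes "\<forall>a\<in>{2..<K}. \<mu> (a + 1) \<le> (\<mu> a :: real)"
  shows "2 \<le> a \<Longrightarrow> a \<le> K \<Longrightarrow> \<mu> a \<le> \<mu> 2"
proof (induction a)
  case 0 then show ?case by simp
next
  case (Suc a)
  show ?case
  proof (cases "Suc a = 2")
    case True then show ?thesis by (simp add: numeral_2_eq_2)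
  next
    case False
    then have "2 \<le> a" "a < K" using Suc.prems by auto
    then have "a \<in> {2..<K}" by simp
    then have "\<mu> (a + 1) \<le> \<mu> a" using assms by blast
    then have "\<mu> (Suc a) \<le> \<mu> a" by simp
    also have "\<mu> a \<le> \<mu> 2" using Suc.IH[OF \<open>2 \<le> a\<close> less_imp_le[OF \<open>a < K\<close>]] .
    finally show ?thesis .
  qed
qed

theorem lemma5:
  fixes M :: "'a measure" and n K Ssz :: nat and \<mu> :: "nat \<Rightarrow> real"
    and \<alpha> \<beta> \<zeta> lam :: real and Shat :: "nat \<Rightarrow> nat set" and u1 l1 :: "nat \<Rightarrow> nat"
    and Y :: "nat \<Rightarrow> nat \<Rightarrow> nat \<Rightarrow> 'a \<Rightarrow> nat"
    and H Z I U L B :: "nat \<Rightarrow> nat \<Rightarrow> 'a \<Rightarrow> nat"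
    and k jstar i :: nat
  assumes n_pos: "1 \<le> n"
    and mu_range: "\<forall>a\<in>{1..K}. 0 < \<mu> a \<and> \<mu> a < 1"
    and mu_order: "\<mu> 1 > \<mu> 2" "\<forall>a\<in>{2..<K}. \<mu> (a + 1) \<le> \<mu> a"
    and sticky: "\<forall>h\<in>{1..n}. Shat h \<subseteq> {1..K} \<and> card (Shat h) = Ssz \<and>
                   u1 h \<in> {1..K} - Shat h \<and> l1 h \<in> {1..K} - Shat h \<and> u1 h \<noteq> l1 h"
    and prims: "primitives_ok M n K \<mu> Y H Z"
    and run: "algorithm_run M n K \<alpha> \<beta> Shat u1 l1 Y H Z I U L B"
    and alpha: "\<alpha> > 1" and beta: "\<beta> > 1"
    and k: "k \<in> {2..K}"
    and jstar: "real jstar \<ge> (2 powr \<beta> + 1) powr (1 / \<beta>)"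
    and zeta: "\<zeta> > 0"
    and lambda: "sqrt (1 / \<alpha>) < lam" "lam < 1"
    and cond: "sqrt (\<alpha> * ln (real (phase_end \<beta> jstar))) *
                 ((\<mu> 1 - \<mu> k) * (1 - lam) / sqrt (\<zeta> * \<alpha> * ln (real (phase_end \<beta> (2 * jstar))))
                  - 2 * sqrt 2 / real jstar powr (\<beta> / 2))
               \<ge> \<mu> 1 - \<mu> k"
    and i: "i \<in> {1..n}"
  shows "measure M {\<omega> \<in> space M.
            real (pulls I i k (phase_end \<beta> (2 * jstar)) \<omega>)
              < \<zeta> * \<alpha> * ln (real (phase_end \<beta> (2 * jstar))) / (\<mu> 1 - \<mu> k)\<^sup>2 \<and>
            real (pulls I i 1 (phase_end \<beta> jstar) \<omega>) > real jstar powr \<beta> / 2 \<and>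
            (\<forall>j\<in>{jstar..2 * jstar}. \<exists>t\<in>{phase_end \<beta> (j - 1) + 1 .. phase_end \<beta> j}. I i t \<omega> = 1)}
         \<le> 2 * \<zeta> * \<alpha> * \<beta> * ln (real jstar) * real jstar powr (2 * \<beta> * (1 - \<alpha> * lam\<^sup>2))
              / ((\<mu> 1 - \<mu> k)\<^sup>2 * (\<alpha> * lam\<^sup>2 - 1))
           + (1 - 1 / (real n * real K)) ^ jstar"
proof -
  interpret prob_space M using prims by (simp add: primitives_ok_def)
  have ind: "indep_vars (\<lambda>_. count_space UNIV) (prim Y H Z) (prim_index n K)"
    using prims by (simp add: primitives_ok_def)
  define J where "J = jstar"
  define a1 where "a1 = phase_end \<beta> J"
  define a2 where "a2 = phase_end \<beta> (2 * J)"
  define P where "P = real J powr \<beta>"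
  define \<Delta> where "\<Delta> = \<mu> 1 - \<mu> k"
  define \<tau> where "\<tau> = \<zeta> * \<alpha> * ln (real a2) / \<Delta>\<^sup>2"
  define c where "c = \<alpha> * lam\<^sup>2"
  define E where "E = {\<omega> \<in> space M.
            real (pulls I i k (phase_end \<beta> (2 * jstar)) \<omega>)
              < \<zeta> * \<alpha> * ln (real (phase_end \<beta> (2 * jstar))) / (\<mu> 1 - \<mu> k)\<^sup>2 \<and>
            real (pulls I i 1 (phase_end \<beta> jstar) \<omega>) > real jstar powr \<beta> / 2 \<and>
            (\<forall>j\<in>{jstar..2 * jstar}. \<exists>t\<in>{phase_end \<beta> (j - 1) + 1 .. phase_end \<beta> j}. I i t \<omega> = 1)}"
  define N where "N = {\<omega>\<in>space M. \<forall>j\<in>{J..<2*J}. \<not> (H i j \<omega> = n + 1 \<and> Z i j \<omega> = k)}"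
  define Dk where "Dk = (\<lambda>t s. {\<omega>\<in>space M. (\<Sum>m=1..s. real (Y i k m \<omega>)) / real s \<le> \<mu> k - lam * sqrt (\<alpha> * ln (real t) / real s)})"
  define D1 where "D1 = (\<lambda>t u. {\<omega>\<in>space M. (\<Sum>m=1..u. real (Y i 1 m \<omega>)) / real u \<ge> \<mu> 1 + sqrt (2 * \<alpha> * ln (real t) / P)})"
  define Tset where "Tset = {a1+1..a2}"
  define Sset where "Sset = {s. 1 \<le> s \<and> real s < \<tau>}"
  define Uset where "Uset = (\<lambda>t. {u\<in>{1..<t}. P / 2 < real u})"
  define RHS1 where "RHS1 = 2 * \<zeta> * \<alpha> * \<beta> * ln (real jstar) * real jstar powr (2 * \<beta> * (1 - \<alpha> * lam\<^sup>2))
              / ((\<mu> 1 - \<mu> k)\<^sup>2 * (\<alpha> * lam\<^sup>2 - 1))"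
  have k1: "1 \<le> k" "k \<le> K" "2 \<le> k" using k by auto
  have K2: "2 \<le> K" using k by auto
  have Dpos: "\<Delta> > 0"
    using mu_mono[OF mu_order(2) k1(3) k1(2)] mu_order(1) by (simp add: \<Delta>_def)
  have bpos: "\<beta> > 0" using beta by simp
  have apos: "\<alpha> > 0" using alpha by simp
  have lampos: "lam > 0"
  proof -
    have "sqrt (1 / \<alpha>) \<ge> 0" using apos by simp
    then show ?thesis using lambda(1) by linarith
  qed
  have c1: "c > 1"
  proof -
    have "sqrt (1 / \<alpha>) ^ 2 < lam ^ 2" using lambda(1) apos by (intro power_strict_mono) auto
    moreover have "sqrt (1 / \<alpha>) ^ 2 = 1 / \<alpha>" using apos by simp
    ultimately have "1 / \<alpha> < lam\<^sup>2" by simp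
    then have "\<alpha> * (1 / \<alpha>) < \<alpha> * lam\<^sup>2" using apos by (intro mult_strict_left_mono) auto
    then show ?thesis using apos by (simp add: c_def)
  qed
  have ac: "\<alpha> \<ge> c"
  proof -
    have "lam\<^sup>2 \<le> 1" using lampos lambda(2) by (simp add: power_le_one)
    then show ?thesis using apos unfolding c_def by (simp add: mult_left_le)
  qed
  have P3: "P \<ge> 2 powr \<beta> + 1"
  proof -
    have "((2 powr \<beta> + 1) powr (1 / \<beta>)) powr \<beta> \<le> real J powr \<beta>"
      using jstar bpos by (intro powr_mono2) (auto simp: J_def)
    moreover have "((2 powr \<beta> + 1) powr (1 / \<beta>)) powr \<beta> = 2 powr \<beta> + 1"
      using bpos by (simp add: powr_powr)
    ultimately show ?thesis by (simp add: P_def)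
  qed
  have two: "2 powr \<beta> \<ge> 2"
  proof -
    have "(2::real) powr 1 \<le> 2 powr \<beta>" using beta by (intro powr_mono) auto
    then show ?thesis by simp
  qed
  have P3': "P \<ge> 3" using P3 two by simp
  have J2: "J \<ge> 2"
  proof (rule ccontr)
    assume "\<not> J \<ge> 2"
    then have "J = 0 \<or> J = 1" by auto
    then have "P \<le> 1" by (auto simp: P_def)
    then show False using P3' by simp
  qed
  have a1P: "real a1 \<ge> P"
    using J2 by (simp add: a1_def phase_end_def P_def)
  have a1_3: "a1 \<ge> 3" using a1P P3' by simp
  have a12: "a1 \<le> a2" unfolding a1_def a2_def by (rule phase_end_mono) (use bpos in auto)
  have a2P: "real a2 \<le> P * P"
  proof -
    have "real a2 = real (nat \<lceil>real (2 * J) powr \<beta>\<rceil>)" using J2 by (simp add: a2_def phase_end_def)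
    also have "\<dots> \<le> real (2 * J) powr \<beta> + 1"
    proof -
      have "real (nat \<lceil>real (2 * J) powr \<beta>\<rceil>) = of_int \<lceil>real (2 * J) powr \<beta>\<rceil>" by simp
      then show ?thesis by linarith
    qed
    also have "real (2 * J) powr \<beta> = 2 powr \<beta> * P" by (simp add: P_def powr_mult)
    also have "2 powr \<beta> * P + 1 \<le> (P - 1) * P + 1" using P3 P3' by (intro add_right_mono mult_right_mono) auto
    also have "\<dots> \<le> P * P" using P3' by (simp add: algebra_simps)
    finally show ?thesis .
  qed
  have lnJ: "ln P = \<beta> * ln (real J)" using J2 by (simp add: P_def ln_powr)
  have lna2: "ln (real a2) \<le> 2 * \<beta> * ln (real J)"
  proof -
    have "ln (real a2) \<le> ln (P * P)" using a2P a1_3 a12 by simp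
    also have "\<dots> = 2 * \<beta> * ln (real J)" using P3' lnJ by (simp add: ln_mult)
    finally show ?thesis .
  qed
  have lna1: "ln (real a1) > 0" using a1_3 by simp
  have lna2pos: "ln (real a2) > 0" using a1_3 a12 by simp
  define C where "C = 2 * \<zeta> * \<alpha> * \<beta> * ln (real J) / \<Delta>\<^sup>2"
  have tauC: "\<tau> \<le> C"
  proof -
    have "\<zeta> * \<alpha> * ln (real a2) \<le> \<zeta> * \<alpha> * (2 * \<beta> * ln (real J))"
      using lna2 zeta apos by (intro mult_left_mono) auto
    then show ?thesis unfolding \<tau>_def C_def using Dpos by (intro divide_right_mono) (auto simp: mult_ac)
  qed
  define W where "W = P powr (2 * (1 - c))"
  have RHS1_eq: "RHS1 = C * W / (c - 1)"
  proof -
    have "real jstar powr (2 * \<beta> * (1 - \<alpha> * lam\<^sup>2)) = W"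
      unfolding W_def P_def J_def c_def by (simp add: powr_powr mult_ac)
    then show ?thesis unfolding RHS1_def C_def c_def J_def \<Delta>_def by (simp add: field_simps)
  qed
  have RHS1_nn: "RHS1 \<ge> 0"
  proof -
    have "ln (real J) \<ge> 0" using J2 by simp
    then have "C \<ge> 0" unfolding C_def using zeta apos bpos by simp
    moreover have "W \<ge> 0" by (simp add: W_def)
    ultimately show ?thesis using RHS1_eq c1 by simp
  qed
  have runi: "\<forall>\<omega>\<in>space M.
        (\<forall>j\<ge>1.
           (\<forall>t\<in>{phase_end \<beta> (j - 1) + 1 .. phase_end \<beta> j}.
              I i t \<omega> \<in> active Shat U L i j \<omega> \<and>
              (\<forall>k\<in>active Shat U L i j \<omega>. ucb \<alpha> Y I i k t \<omega> \<le> ucb \<alpha> Y I i (I i t \<omega>) t \<omega>)) \<and>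
           (if recomm n H Z B i j \<omega> \<in> active Shat U L i j \<omega>
            then U i (j + 1) \<omega> = U i j \<omega> \<and> L i (j + 1) \<omega> = L i j \<omega>
            else L i (j + 1) \<omega> = recomm n H Z B i j \<omega>))"
    using run i unfolding algorithm_run_def by metis
  have incl: "\<exists>t\<in>Tset. \<exists>s\<in>Sset. \<omega> \<in> Dk t s \<or> (\<exists>u\<in>Uset t. \<omega> \<in> D1 t u)"
    if \<omega>E: "\<omega> \<in> E" and \<omega>N: "\<omega> \<notin> N" for \<omega>
  proof -
    have sp: "\<omega> \<in> space M" using \<omega>E by (simp add: E_def)
    obtain j0 where j0: "j0 \<in> {J..<2*J}" "H i j0 \<omega> = n + 1" "Z i j0 \<omega> = k"
      using \<omega>N sp unfolding N_def by auto
    have j01: "j0 \<ge> 1" using j0 J2 by auto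
    have rec: "recomm n H Z B i j0 \<omega> = k" using j0 by (simp add: recomm_def)
    have kact: "k \<in> active Shat U L i (j0 + 1) \<omega>"
    proof (cases "k \<in> active Shat U L i j0 \<omega>")
      case True
      then have "U i (j0 + 1) \<omega> = U i j0 \<omega> \<and> L i (j0 + 1) \<omega> = L i j0 \<omega>"
        using runi sp j01 rec by metis
      then show ?thesis using True by (simp add: active_def)
    next
      case False
      then have "L i (j0 + 1) \<omega> = k" using runi sp j01 rec by metis
      then show ?thesis by (simp add: active_def)
    qed
    have "j0 + 1 \<in> {jstar..2 * jstar}" using j0 by (auto simp: J_def)
    then obtain t where t: "t \<in> {phase_end \<beta> j0 + 1 .. phase_end \<beta> (j0 + 1)}" "I i t \<omega> = 1"
      using \<omega>E unfolding E_def by fastforce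
    have ucbi: "ucb \<alpha> Y I i k t \<omega> \<le> ucb \<alpha> Y I i 1 t \<omega>"
    proof -
      have "\<forall>t\<in>{phase_end \<beta> (j0 + 1 - 1) + 1 .. phase_end \<beta> (j0 + 1)}.
              (\<forall>k\<in>active Shat U L i (j0 + 1) \<omega>. ucb \<alpha> Y I i k t \<omega> \<le> ucb \<alpha> Y I i (I i t \<omega>) t \<omega>)"
        using runi sp by (metis le_add2)
      moreover have "t \<in> {phase_end \<beta> (j0 + 1 - 1) + 1 .. phase_end \<beta> (j0 + 1)}" using t(1) by simp
      ultimately have "ucb \<alpha> Y I i k t \<omega> \<le> ucb \<alpha> Y I i (I i t \<omega>) t \<omega>" using kact by blast
      then show ?thesis using t(2) by simp
    qed
    have ta1: "a1 \<le> phase_end \<beta> j0" unfolding a1_def using j0 bpos by (intro phase_end_mono) auto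
    have ta2: "phase_end \<beta> (j0 + 1) \<le> a2" unfolding a2_def using j0 bpos by (intro phase_end_mono) auto
    have tT: "t \<in> Tset" using t ta1 ta2 by (auto simp: Tset_def)
    have t1: "a1 \<le> t - 1" using t ta1 by auto
    define u where "u = pulls I i 1 (t - 1) \<omega>"
    define s where "s = pulls I i k (t - 1) \<omega>"
    have uP: "real u > P / 2"
    proof -
      have "pulls I i 1 a1 \<omega> \<le> u" unfolding u_def using t1 by (rule pulls_mono)
      moreover have "real (pulls I i 1 a1 \<omega>) > P / 2" using \<omega>E by (simp add: E_def a1_def J_def P_def)
      ultimately show ?thesis by linarith
    qed
    have uT: "u \<in> Uset t"
    proof -
      have "u \<le> t - 1" unfolding u_def by (rule pulls_le)
      moreover have "u \<ge> 1" using uP P3' by (cases u) auto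
      ultimately show ?thesis using uP t by (auto simp: Uset_def)
    qed
    have st: "real s < \<tau>"
    proof -
      have "s \<le> pulls I i k a2 \<omega>" unfolding s_def using t ta2 by (intro pulls_mono) auto
      moreover have "real (pulls I i k a2 \<omega>) < \<tau>" using \<omega>E by (simp add: E_def a2_def J_def \<tau>_def \<Delta>_def)
      ultimately show ?thesis by linarith
    qed
    have u0: "u \<noteq> 0" using uT by (auto simp: Uset_def)
    have s0: "s \<noteq> 0"
    proof
      assume "s = 0"
      then have "ucb \<alpha> Y I i k t \<omega> = \<infinity>" by (simp add: ucb_def s_def)
      moreover have "ucb \<alpha> Y I i 1 t \<omega> \<noteq> \<infinity>" using u0 by (simp add: ucb_def u_def)
      ultimately show False using ucbi by simp
    qed
    have sS: "s \<in> Sset" using s0 st by (simp add: Sset_def)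
    define mk where "mk = (\<Sum>m=1..s. real (Y i k m \<omega>)) / real s"
    define m1 where "m1 = (\<Sum>m=1..u. real (Y i 1 m \<omega>)) / real u"
    have ineq: "mk + sqrt (\<alpha> * ln (real t) / real s) \<le> m1 + sqrt (\<alpha> * ln (real t) / real u)"
      using ucbi s0 u0 by (simp add: ucb_def emp_mean_def s_def u_def mk_def m1_def)
    have Ltt: "ln (real a1) \<le> ln (real t)" using t1 a1_3 by simp
    have Q: "real J powr (\<beta> / 2) > 0" "real J powr (\<beta> / 2) * real J powr (\<beta> / 2) = P"
      using J2 by (auto simp: P_def powr_add[symmetric])
    have cond': "sqrt (\<alpha> * ln (real a1)) * (\<Delta> * (1 - lam) / sqrt (\<zeta> * \<alpha> * ln (real a2)) - 2 * sqrt 2 / real J powr (\<beta> / 2)) \<ge> \<Delta>"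
      using cond by (simp add: a1_def a2_def \<Delta>_def J_def)
    have "mk \<le> \<mu> k - lam * sqrt (\<alpha> * ln (real t) / real s) \<or> m1 \<ge> \<mu> 1 + sqrt (2 * \<alpha> * ln (real t) / P)"
      by (rule key_arith[OF apos lna1 Ltt lna2pos zeta Dpos \<Delta>_def lambda(2) _ Q(1) Q(2) _ _ uP cond' ineq])
         (use P3' s0 st in \<open>auto simp: \<tau>_def\<close>)
    then show ?thesis using tT sS uT sp unfolding Dk_def D1_def mk_def m1_def by blast
  qed
  have k': "k \<in> {1..K}" using k1 by simp
  have one': "(1::nat) \<in> {1..K}" using K2 by simp
  have Yk: "\<forall>m\<ge>1. (\<forall>\<omega>\<in>space M. Y i k m \<omega> \<in> {0, 1}) \<and> measure M {\<omega> \<in> space M. Y i k m \<omega> = 1} = \<mu> k"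
    using prims i k' unfolding primitives_ok_def by blast
  have Y1: "\<forall>m\<ge>1. (\<forall>\<omega>\<in>space M. Y i 1 m \<omega> \<in> {0, 1}) \<and> measure M {\<omega> \<in> space M. Y i 1 m \<omega> = 1} = \<mu> 1"
    using prims i one' unfolding primitives_ok_def by blast
  have Nsets: "N \<in> sets M"
  proof -
    have "N = space M - (\<Union>j\<in>{J..<2*J}. {\<omega>\<in>space M. H i j \<omega> = n + 1 \<and> Z i j \<omega> = k})"
      by (auto simp: N_def)
    moreover have "(\<Union>j\<in>{J..<2*J}. {\<omega>\<in>space M. H i j \<omega> = n + 1 \<and> Z i j \<omega> = k}) \<in> sets M"
      using HZ_sets[OF ind i] J2 by (intro sets.finite_UN) auto
    ultimately show ?thesis by auto
  qed
  have mN: "measure M N = (1 - 1 / (real n * real K)) ^ jstar"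
  proof -
    have pj: "prob {\<omega>\<in>space M. H i j \<omega> = n + 1 \<and> Z i j \<omega> = k} = 1 / (real n * real K)" if j1: "1 \<le> j" for j
    proof -
      have "\<forall>h\<in>{1..n+1} - {i}. measure M {\<omega> \<in> space M. H i j \<omega> = h} = 1 / real n"
        using prims i j1 unfolding primitives_ok_def by blast
      moreover have "n + 1 \<in> {1..n+1} - {i}" using i by auto
      ultimately have H1: "prob {\<omega>\<in>space M. H i j \<omega> = n + 1} = 1 / real n" by blast
      have "\<forall>a\<in>{1..K}. measure M {\<omega> \<in> space M. Z i j \<omega> = a} = 1 / real K"
        using prims i j1 unfolding primitives_ok_def by blast
      then have Z1: "prob {\<omega>\<in>space M. Z i j \<omega> = k} = 1 / real K" using k' by blast
      show ?thesis using HZ_prob[OF ind i j1] H1 Z1 by simp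
    qed
    have "prob N = (1 - 1 / (real n * real K)) ^ J"
      unfolding N_def by (rule N_prob[OF ind i _ pj]) (use J2 in auto)
    then show ?thesis by (simp add: J_def)
  qed
  have PDk: "Dk t s \<in> sets M \<and> measure M (Dk t s) \<le> real t powr (-(2 * c))" if tT: "t \<in> Tset" and s1: "1 \<le> s" for t s
  proof -
    have tpos: "real t > 0" using tT a1_3 by (auto simp: Tset_def)
    have lnt: "ln (real t) \<ge> 0" using tT a1_3 by (auto simp: Tset_def)
    define \<epsilon> where "\<epsilon> = lam * sqrt (\<alpha> * ln (real t) / real s)"
    have e0: "\<epsilon> \<ge> 0" using lampos apos lnt by (simp add: \<epsilon>_def)
    have "measure M (Dk t s) \<le> exp (-2 * real s * \<epsilon>\<^sup>2)"
      unfolding Dk_def using hoeff_both(1)[OF ind i k' s1 Yk e0] by (simp add: \<epsilon>_def)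
    also have "-2 * real s * \<epsilon>\<^sup>2 = (-(2 * c)) * ln (real t)"
    proof -
      have "\<epsilon>\<^sup>2 = lam\<^sup>2 * (\<alpha> * ln (real t) / real s)"
        unfolding \<epsilon>_def power_mult_distrib using apos lnt by simp
      then show ?thesis using s1 by (simp add: c_def field_simps)
    qed
    also have "exp ((-(2 * c)) * ln (real t)) = real t powr (-(2 * c))" using tpos by (simp add: powr_def)
    finally show ?thesis using mean_sets(1)[OF ind i k'] unfolding Dk_def by simp
  qed
  have PD1: "D1 t u \<in> sets M \<and> measure M (D1 t u) \<le> real t powr (-(2 * \<alpha>))" if tT: "t \<in> Tset" and uU: "u \<in> Uset t" for t u
  proof -
    have tpos: "real t > 0" using tT a1_3 by (auto simp: Tset_def)
    have lnt: "ln (real t) \<ge> 0" using tT a1_3 by (auto simp: Tset_def)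
    have u1: "1 \<le> u" and uP: "P / 2 < real u" using uU by (auto simp: Uset_def)
    have Ppos: "P > 0" using P3' by simp
    define \<epsilon> where "\<epsilon> = sqrt (2 * \<alpha> * ln (real t) / P)"
    have e0: "\<epsilon> \<ge> 0" using apos lnt Ppos by (simp add: \<epsilon>_def)
    have "measure M (D1 t u) \<le> exp (-2 * real u * \<epsilon>\<^sup>2)"
      unfolding D1_def using hoeff_both(2)[OF ind i one' u1 Y1 e0] by (simp add: \<epsilon>_def)
    also have "\<dots> \<le> exp ((-(2 * \<alpha>)) * ln (real t))"
    proof -
      have "\<epsilon>\<^sup>2 = 2 * \<alpha> * ln (real t) / P" unfolding \<epsilon>_def using apos lnt Ppos by simp
      then have "real u * \<epsilon>\<^sup>2 = (2 * real u / P) * (\<alpha> * ln (real t))" by (simp add: field_simps)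
      moreover have "2 * real u / P \<ge> 1" using uP Ppos by (simp add: field_simps)
      moreover have "\<alpha> * ln (real t) \<ge> 0" using apos lnt by simp
      ultimately have "real u * \<epsilon>\<^sup>2 \<ge> \<alpha> * ln (real t)"
        by (metis mult_le_cancel_right1 order_trans mult_right_mono mult_1)
      then show ?thesis by simp
    qed
    also have "exp ((-(2 * \<alpha>)) * ln (real t)) = real t powr (-(2 * \<alpha>))" using tpos by (simp add: powr_def)
    finally show ?thesis using mean_sets(2)[OF ind i one'] unfolding D1_def by simp
  qed
  have finT: "finite Tset" by (simp add: Tset_def)
  have finS: "finite Sset"
  proof -
    have "Sset \<subseteq> {..nat \<lceil>\<tau>\<rceil>}"
    proof
      fix s assume "s \<in> Sset"
      then have "real s < \<tau>" by (simp add: Sset_def)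
      then have "real s \<le> real (nat \<lceil>\<tau>\<rceil>)" by linarith
      then show "s \<in> {..nat \<lceil>\<tau>\<rceil>}" by simp
    qed
    then show ?thesis by (rule finite_subset) simp
  qed
  have finU: "finite (Uset t)" for t by (simp add: Uset_def)
  define DK where "DK = (\<Union>t\<in>Tset. \<Union>s\<in>Sset. Dk t s)"
  define DU where "DU = (\<Union>t\<in>Tset. \<Union>u\<in>Uset t. D1 t u)"
  have DKs: "DK \<in> sets M" unfolding DK_def using PDk finT finS by (auto simp: Sset_def)
  have DUs: "DU \<in> sets M" unfolding DU_def using PD1 finT finU by auto
  have powsum: "(\<Sum>t\<in>Tset. real t powr (-p)) \<le> real a1 powr (1 - p) / (p - 1)" if "p > 1" for p
    unfolding Tset_def using tele_sum2[OF that, of a1 a2] a1_3 by simp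
  show ?thesis
  proof (cases "\<tau> > 1")
    case False
    then have "Sset = {}" by (auto simp: Sset_def)
    then have "E \<subseteq> N" using incl by blast
    then have "measure M E \<le> measure M N" using Nsets by (rule finite_measure_mono)
    then have "measure M E \<le> RHS1 + (1 - 1 / (real n * real K)) ^ jstar" using mN RHS1_nn by simp
    then show ?thesis unfolding E_def RHS1_def .
  next
    case True
    have cardS: "real (card Sset) \<le> \<tau>"
    proof -
      have "Sset \<subseteq> {1..<nat \<lceil>\<tau>\<rceil>}"
      proof
        fix s assume "s \<in> Sset"
        then have "1 \<le> s" "real s < \<tau>" by (auto simp: Sset_def)
        then have "int s < \<lceil>\<tau>\<rceil>" by (simp add: less_ceiling_iff)
        then show "s \<in> {1..<nat \<lceil>\<tau>\<rceil>}" using \<open>1 \<le> s\<close> by auto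
      qed
      then have "card Sset \<le> nat \<lceil>\<tau>\<rceil> - 1" using card_mono[of "{1..<nat \<lceil>\<tau>\<rceil>}" Sset] by simp
      moreover have "real (nat \<lceil>\<tau>\<rceil> - 1) = of_int \<lceil>\<tau>\<rceil> - 1"
      proof -
        have cp: "0 < \<lceil>\<tau>\<rceil>" using True by simp
        then have g: "1 \<le> nat \<lceil>\<tau>\<rceil>" by linarith
        have "real (nat \<lceil>\<tau>\<rceil> - 1) = real (nat \<lceil>\<tau>\<rceil>) - 1" using g by (simp add: of_nat_diff)
        also have "real (nat \<lceil>\<tau>\<rceil>) = of_int \<lceil>\<tau>\<rceil>" using cp by simp
        finally show ?thesis .
      qed
      moreover have "of_int \<lceil>\<tau>\<rceil> - 1 < \<tau>" by linarith
      ultimately show ?thesis by (smt (verit) of_nat_le_iff)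
    qed
    have mDK: "measure M DK \<le> \<tau> * (real a1 powr (1 - 2 * c) / (2 * c - 1))"
    proof -
      have "measure M DK \<le> (\<Sum>t\<in>Tset. measure M (\<Union>s\<in>Sset. Dk t s))"
        unfolding DK_def using PDk finS by (intro finite_measure_subadditive_finite finT) (auto simp: Sset_def)
      also have "\<dots> \<le> (\<Sum>t\<in>Tset. \<Sum>s\<in>Sset. measure M (Dk t s))"
        using PDk by (intro sum_mono finite_measure_subadditive_finite finS) (auto simp: Sset_def)
      also have "\<dots> \<le> (\<Sum>t\<in>Tset. \<Sum>s\<in>Sset. real t powr (-(2 * c)))"
        using PDk by (intro sum_mono) (auto simp: Sset_def)
      also have "\<dots> = (\<Sum>t\<in>Tset. real (card Sset) * real t powr (-(2 * c)))" by simp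
      also have "\<dots> \<le> (\<Sum>t\<in>Tset. \<tau> * real t powr (-(2 * c)))"
        using cardS by (intro sum_mono mult_right_mono) auto
      also have "\<dots> = \<tau> * (\<Sum>t\<in>Tset. real t powr (-(2 * c)))" by (simp add: sum_distrib_left)
      also have "\<dots> \<le> \<tau> * (real a1 powr (1 - 2 * c) / (2 * c - 1))"
        using powsum[of "2 * c"] c1 True by (intro mult_left_mono) auto
      finally show ?thesis .
    qed
    have mDU: "measure M DU \<le> real a1 powr (1 - (2 * \<alpha> - 1)) / (2 * \<alpha> - 1 - 1)"
    proof -
      have "measure M DU \<le> (\<Sum>t\<in>Tset. measure M (\<Union>u\<in>Uset t. D1 t u))"
        unfolding DU_def using PD1 finU by (intro finite_measure_subadditive_finite finT) auto
      also have "\<dots> \<le> (\<Sum>t\<in>Tset. \<Sum>u\<in>Uset t. measure M (D1 t u))"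
        using PD1 by (intro sum_mono finite_measure_subadditive_finite finU) auto
      also have "\<dots> \<le> (\<Sum>t\<in>Tset. \<Sum>u\<in>Uset t. real t powr (-(2 * \<alpha>)))"
        using PD1 by (intro sum_mono) auto
      also have "\<dots> = (\<Sum>t\<in>Tset. real (card (Uset t)) * real t powr (-(2 * \<alpha>)))" by simp
      also have "\<dots> \<le> (\<Sum>t\<in>Tset. real t * real t powr (-(2 * \<alpha>)))"
      proof (intro sum_mono mult_right_mono)
        fix t assume "t \<in> Tset"
        have "card (Uset t) \<le> card {1..<t}" unfolding Uset_def by (intro card_mono) auto
        then show "real (card (Uset t)) \<le> real t" by simp
      qed simp
      also have "\<dots> = (\<Sum>t\<in>Tset. real t powr (-(2 * \<alpha> - 1)))"
      proof (intro sum.cong refl)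
        fix t assume "t \<in> Tset"
        then have tpos: "real t > 0" using a1_3 by (auto simp: Tset_def)
        have "real t powr (-(2 * \<alpha> - 1)) = real t powr (1 + (-(2 * \<alpha>)))" by (simp add: algebra_simps)
        also have "\<dots> = real t powr 1 * real t powr (-(2 * \<alpha>))" by (rule powr_add)
        finally show "real t * real t powr (-(2 * \<alpha>)) = real t powr (-(2 * \<alpha> - 1))" using tpos by simp
      qed
      also have "\<dots> \<le> real a1 powr (1 - (2 * \<alpha> - 1)) / (2 * \<alpha> - 1 - 1)"
        using powsum[of "2 * \<alpha> - 1"] alpha by simp
      finally show ?thesis .
    qed
    have EU: "E \<subseteq> N \<union> DK \<union> DU"
    proof
      fix \<omega> assume "\<omega> \<in> E"
      show "\<omega> \<in> N \<union> DK \<union> DU"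
      proof (cases "\<omega> \<in> N")
        case False
        then show ?thesis using incl[OF \<open>\<omega> \<in> E\<close> False] unfolding DK_def DU_def by blast
      qed simp
    qed
    have "measure M E \<le> measure M (N \<union> DK \<union> DU)"
      using EU Nsets DKs DUs by (intro finite_measure_mono) auto
    also have "\<dots> \<le> measure M (N \<union> DK) + measure M DU"
      using Nsets DKs DUs by (intro measure_subadditive) auto
    also have "\<dots> \<le> measure M N + measure M DK + measure M DU"
      using measure_subadditive[OF Nsets DKs] by simp
    also have "\<dots> \<le> (1 - 1 / (real n * real K)) ^ jstar + (\<tau> * (real a1 powr (1 - 2 * c) / (2 * c - 1))
         + real a1 powr (1 - (2 * \<alpha> - 1)) / (2 * \<alpha> - 1 - 1))"
      using mN mDK mDU by simp
    also have "\<dots> \<le> (1 - 1 / (real n * real K)) ^ jstar + C * W / (c - 1)"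
      using final_arith[OF c1 ac P3' a1P tauC True W_def] by simp
    finally have "measure M E \<le> RHS1 + (1 - 1 / (real n * real K)) ^ jstar" using RHS1_eq by simp
    then show ?thesis unfolding E_def RHS1_def .
  qed
qed


end
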